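(* Let $k\ge1$ be an integer and write $[k+]=\{1,2,\ldots,k\}$. Then $d(A)\le d([k+])$ for every nonempty set $A\subseteq\{0,1,\ldots,k\}$, and if $k\notin\{1,3\}$ then equality holds only for $A=[k+]$. Equivalently, in base $2$ lunar arithmetic, among all $k$-digit numbers $n$ (i.e. $2^{k-1}\le n<2^k$), the maximal value of $d_2(n)$ occurs at $n=2^k-2$ (binary $11\ldots10$), and this is the unique maximum when $k\notin\{2,4\}$.
   Context: $\mathbb{N}=\{0,1,2,\ldots\}$. For $A,B\subseteq\mathbb{N}$, $A+B=\{a+b:a\in A,b\in B\}$. For a nonempty finite $C\subseteq\mathbb{N}$, $B\subseteq\mathbb{N}$ is a divisor of $C$ if $B+D=C$ for some $D\subseteq\mathbb{N}$, and $d(C)$ is the number of divisors of $C$. Base-$b$ lunar arithmetic ($b\ge2$): for numbers with base-$b$ digits $x=\sum_i x_ib^i$, $y=\sum_j y_jb^j$ ($0\le x_i,y_j\le b-1$), the lunar product is $x\otimes y=\sum_n\big(\max_{i+j=n}\min(x_i,y_j)\big)b^n$. For a positive integer $n$, $d_b(n)$ is the number of positive integers $m$ such that $m\otimes q=n$ for some integer $q$ (the lunar divisors of $n$). *)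

theory Defs
  imports Main
begin

definition sumset :: "nat set \<Rightarrow> nat set \<Rightarrow> nat set" where
  "sumset A B = {a + b | a b. a \<in> A \<and> b \<in> B}"

definition is_divisor :: "nat set \<Rightarrow> nat set \<Rightarrow> bool" where
  "is_divisor B C \<longleftrightarrow> (\<exists>D. sumset B D = C)"

definition num_divisors :: "nat set \<Rightarrow> nat" where
  "num_divisors C = card {B. is_divisor B C}"

end

theory Submission imports Defs begin

definition cov :: "nat set \<Rightarrow> nat \<Rightarrow> nat \<Rightarrow> bool" where
 "cov B b m \<longleftrightarrow> 0 \<in> B \<and> b \<in> B \<and> b \<le> m \<and> (\<forall>x\<in>B. x \<le> b) \<and>
    (\<forall>x\<le>b. \<exists>y\<in>B. y \<le> x \<and> x \<le> y + (m - b))"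

definition NN :: "nat \<Rightarrow> nat set set" where "NN m = {B. \<exists>b. cov B b m}"

lemma NN_sub: "NN m \<subseteq> Pow {0..m}"
proof
  fix B assume "B \<in> NN m"
  then obtain b where "cov B b m" unfolding NN_def by auto
  then have "\<forall>x\<in>B. x \<le> m" unfolding cov_def by (meson le_trans)
  then show "B \<in> Pow {0..m}" by auto
qed

lemma NN_fin: "finite (NN m)"
  by (rule finite_subset[OF NN_sub]) simp

lemma zero_NN: "{0} \<in> NN m"
  unfolding NN_def cov_def by (rule CollectI, rule exI[of _ 0]) simp

lemma NN_pos: "card (NN m) \<ge> 1"
proof -
  have "NN m \<noteq> {}" using zero_NN by blast
  then show ?thesis using NN_fin by (simp add: Suc_le_eq card_gt_0_iff)
qed

lemma interval_NN: "{0..m} \<in> NN m"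
  unfolding NN_def cov_def by (rule CollectI, rule exI[of _ m]) auto
lemma NN_mono: "m \<le> m' \<Longrightarrow> NN m \<subseteq> NN m'"
proof
  fix B assume m: "m \<le> m'" and "B \<in> NN m"
  then obtain b where c: "cov B b m" unfolding NN_def by auto
  have "cov B b m'" unfolding cov_def
  proof (intro conjI allI impI ballI)
    fix x assume "x \<le> b"
    then obtain y where "y \<in> B" "y \<le> x" "x \<le> y + (m - b)" using c unfolding cov_def by blast
    then show "\<exists>y\<in>B. y \<le> x \<and> x \<le> y + (m' - b)" using m by (meson add_le_mono diff_le_mono le_refl le_trans)
  next
    show "0 \<in> B" using c unfolding cov_def by blast
  next
    show "b \<in> B" using c unfolding cov_def by blast
  next
    show "b \<le> m'" using c m unfolding cov_def by linarith
  next
    fix x assume "x \<in> B" then show "x \<le> b" using c unfolding cov_def by blast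
  qed
  then show "B \<in> NN m'" unfolding NN_def by auto
qed

lemma NN_strict: "m < m' \<Longrightarrow> card (NN m) < card (NN m')"
proof -
  assume "m < m'"
  have "{0..m'} \<notin> NN m"
  proof
    assume "{0..m'} \<in> NN m"
    then obtain b where "cov {0..m'} b m" unfolding NN_def by auto
    then have "\<forall>x\<in>{0..m'}. x \<le> b" "b \<le> m" unfolding cov_def by blast+
    then have "m' \<le> b" "b \<le> m" by auto
    then show False using \<open>m < m'\<close> by simp
  qed
  then have "NN m \<subset> NN m'" using NN_mono[of m m'] interval_NN[of m'] \<open>m < m'\<close>
    by (metis less_imp_le psubsetI)
  then show ?thesis by (rule psubset_card_mono[OF NN_fin])
qed

lemma NN_le: "m \<le> m' \<Longrightarrow> card (NN m) \<le> card (NN m')"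
  by (rule card_mono[OF NN_fin NN_mono])

lemma covD:
  assumes "cov B b m"
  shows "0 \<in> B" "b \<in> B" "b \<le> m" "\<And>x. x \<in> B \<Longrightarrow> x \<le> b"
    "\<And>x. x \<le> b \<Longrightarrow> \<exists>y\<in>B. y \<le> x \<and> x \<le> y + (m - b)"
  using assms unfolding cov_def by blast+

lemma covI:
  assumes "0 \<in> B" "b \<in> B" "b \<le> m" "\<And>x. x \<in> B \<Longrightarrow> x \<le> b"
    "\<And>x. x \<le> b \<Longrightarrow> \<exists>y\<in>B. y \<le> x \<and> x \<le> y + (m - b)"
  shows "cov B b m"
  using assms unfolding cov_def by blast

lemma L1:
  assumes c: "cov B b (Suc m)" and one: "1 \<in> B"
  shows "cov {y. Suc y \<in> B} (b - 1) m"
proof (rule covI)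
  have b1: "1 \<le> b" using covD(4)[OF c one] .
  show "0 \<in> {y. Suc y \<in> B}" using one by simp
  show "b - 1 \<in> {y. Suc y \<in> B}" using b1 covD(2)[OF c] by simp
  show "b - 1 \<le> m" using covD(3)[OF c] by simp
  show "x \<le> b - 1" if "x \<in> {y. Suc y \<in> B}" for x
    using covD(4)[OF c, of "Suc x"] that by simp
  show "\<exists>y\<in>{y. Suc y \<in> B}. y \<le> x \<and> x \<le> y + (m - (b - 1))" if x: "x \<le> b - 1" for x
  proof -
    have "Suc x \<le> b" using x b1 by simp
    then obtain y where y: "y \<in> B" "y \<le> Suc x" "Suc x \<le> y + (Suc m - b)" using covD(5)[OF c] by blast
    show ?thesis
    proof (cases y)
      case 0
      then show ?thesis using y one b1 by (intro bexI[of _ 0]) auto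
    next
      case (Suc y')
      then show ?thesis using y b1 by (intro bexI[of _ y']) auto
    qed
  qed
qed

lemma L2:
  assumes c: "cov B b (Suc m)" and one: "1 \<notin> B"
  shows "cov (insert 0 {y. Suc y \<in> B}) (b - 1) m"
proof (rule covI)
  show "0 \<in> insert 0 {y. Suc y \<in> B}" by simp
  show "b - 1 \<in> insert 0 {y. Suc y \<in> B}" using covD(2)[OF c] by (cases b) auto
  show "b - 1 \<le> m" using covD(3)[OF c] by simp
  show "x \<le> b - 1" if "x \<in> insert 0 {y. Suc y \<in> B}" for x
    using covD(4)[OF c, of "Suc x"] that by auto
  show "\<exists>y\<in>insert 0 {y. Suc y \<in> B}. y \<le> x \<and> x \<le> y + (m - (b - 1))" if x: "x \<le> b - 1" for x
  proof (cases "x = 0")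
    case True
    then show ?thesis by auto
  next
    case False
    then have "Suc x \<le> b" using x by simp
    then obtain y where y: "y \<in> B" "y \<le> Suc x" "Suc x \<le> y + (Suc m - b)" using covD(5)[OF c] by blast
    show ?thesis
    proof (cases y)
      case 0
      then show ?thesis using y \<open>Suc x \<le> b\<close> by (intro bexI[of _ 0]) auto
    next
      case (Suc y')
      then show ?thesis using y \<open>Suc x \<le> b\<close> by (intro bexI[of _ y']) auto
    qed
  qed
qed

lemma recon: "0 \<in> B \<Longrightarrow> B = insert 0 (Suc ` {y. Suc y \<in> B})"
  apply (rule set_eqI)
  subgoal for x by (cases x) auto
  done

lemma I0:
  shows "card (NN (Suc m)) \<le> 2 * card (NN m)"
    and "m \<ge> 1 \<Longrightarrow> card (NN (Suc m)) < 2 * card (NN m)"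
proof -
  define F where "F = (\<lambda>B::nat set. (if 1 \<in> B then {y. Suc y \<in> B} else insert 0 {y. Suc y \<in> B}, 1 \<in> B))"
  have inj: "inj_on F (NN (Suc m))"
  proof (rule inj_onI)
    fix B1 B2 assume b1: "B1 \<in> NN (Suc m)" and b2: "B2 \<in> NN (Suc m)" and e: "F B1 = F B2"
    have z1: "0 \<in> B1" using b1 unfolding NN_def using covD(1) by blast
    have z2: "0 \<in> B2" using b2 unfolding NN_def using covD(1) by blast
    have fl: "(1 \<in> B1) = (1 \<in> B2)" using e unfolding F_def by simp
    have "{y. Suc y \<in> B1} = {y. Suc y \<in> B2}"
    proof (cases "1 \<in> B1")
      case True
      then show ?thesis using e fl unfolding F_def by simp
    next
      case False
      then have "insert 0 {y. Suc y \<in> B1} = insert 0 {y. Suc y \<in> B2}" using e fl unfolding F_def by simp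
      moreover have "0 \<notin> {y. Suc y \<in> B1}" "0 \<notin> {y. Suc y \<in> B2}" using False fl by auto
      ultimately show ?thesis by (metis insert_ident)
    qed
    then show "B1 = B2" using recon[OF z1] recon[OF z2] by metis
  qed
  have img: "F ` NN (Suc m) \<subseteq> NN m \<times> UNIV"
  proof
    fix p assume "p \<in> F ` NN (Suc m)"
    then obtain B b where p: "p = F B" and c: "cov B b (Suc m)" unfolding NN_def by blast
    show "p \<in> NN m \<times> UNIV"
    proof (cases "1 \<in> B")
      case True
      then show ?thesis using L1[OF c True] p unfolding F_def NN_def by auto
    next
      case False
      then show ?thesis using L2[OF c False] p unfolding F_def NN_def by auto
    qed
  qed
  have fin: "finite (NN m \<times> (UNIV :: bool set))" using NN_fin by simp
  have cardT: "card (NN m \<times> (UNIV :: bool set)) = 2 * card (NN m)"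
    by (simp add: card_cartesian_product)
  show "card (NN (Suc m)) \<le> 2 * card (NN m)"
    using card_inj_on_le[OF inj img fin] cardT by simp
  assume m1: "m \<ge> 1"
  have notin: "({0..m}, False) \<notin> F ` NN (Suc m)"
  proof
    assume "({0..m}, False) \<in> F ` NN (Suc m)"
    then obtain B b where e: "({0..m}, False) = F B" and c: "cov B b (Suc m)" unfolding NN_def by blast
    have n1: "1 \<notin> B" using e unfolding F_def by simp
    then have eq: "insert 0 {y. Suc y \<in> B} = {0..m}" using e unfolding F_def by simp
    have "m \<in> {y. Suc y \<in> B}" using eq m1 by (metis atLeastAtMost_iff insertE le_refl not_one_le_zero zero_le)
    then have "Suc m \<in> B" by simp
    then have "b = Suc m" using covD(3,4)[OF c] by (meson le_antisym)
    then obtain y where "y \<in> B" "y \<le> 1" "1 \<le> y + (Suc m - b)" using covD(5)[OF c, of 1] by auto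
    then have "y = 1" using \<open>b = Suc m\<close> by simp
    then show False using n1 \<open>y \<in> B\<close> by simp
  qed
  have "({0..m}, False) \<in> NN m \<times> UNIV" using interval_NN by simp
  then have "F ` NN (Suc m) \<subset> NN m \<times> UNIV" using img notin by blast
  then have "card (F ` NN (Suc m)) < card (NN m \<times> (UNIV :: bool set))"
    by (rule psubset_card_mono[OF fin])
  then show "card (NN (Suc m)) < 2 * card (NN m)" using card_image[OF inj] cardT by simp
qed

lemma cov_full: assumes c: "cov B m m" shows "B = {0..m}"
proof
  show "B \<subseteq> {0..m}" using covD(4)[OF c] by auto
  show "{0..m} \<subseteq> B"
  proof
    fix x assume "x \<in> {0..m}"
    then obtain y where "y \<in> B" "y \<le> x" "x \<le> y + (m - m)" using covD(5)[OF c, of x] by auto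
    then show "x \<in> B" by simp
  qed
qed

lemma P_cov:
  assumes c: "cov B b m"
  shows "cov (insert 0 (Suc ` B)) (Suc b) (Suc m)"
proof (rule covI)
  show "0 \<in> insert 0 (Suc ` B)" by simp
  show "Suc b \<in> insert 0 (Suc ` B)" using covD(2)[OF c] by simp
  show "Suc b \<le> Suc m" using covD(3)[OF c] by simp
  show "x \<le> Suc b" if "x \<in> insert 0 (Suc ` B)" for x using that covD(4)[OF c] by auto
  show "\<exists>y\<in>insert 0 (Suc ` B). y \<le> x \<and> x \<le> y + (Suc m - Suc b)" if x: "x \<le> Suc b" for x
  proof (cases x)
    case 0
    then show ?thesis by auto
  next
    case (Suc x')
    then obtain y where y: "y \<in> B" "y \<le> x'" "x' \<le> y + (m - b)" using covD(5)[OF c, of x'] x by auto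
    then show ?thesis using Suc by (intro bexI[of _ "Suc y"]) auto
  qed
qed

lemma QL:
  assumes c: "cov B b m" and one: "1 \<in> B" and bm: "b < m"
  shows "cov (insert 0 (Suc ` (B - {0}))) (Suc b) (Suc m)"
proof (rule covI)
  have b1: "1 \<le> b" using covD(4)[OF c one] .
  show "0 \<in> insert 0 (Suc ` (B - {0}))" by simp
  show "Suc b \<in> insert 0 (Suc ` (B - {0}))" using covD(2)[OF c] b1 by simp
  show "Suc b \<le> Suc m" using covD(3)[OF c] by simp
  show "x \<le> Suc b" if "x \<in> insert 0 (Suc ` (B - {0}))" for x using that covD(4)[OF c] by auto
  show "\<exists>y\<in>insert 0 (Suc ` (B - {0})). y \<le> x \<and> x \<le> y + (Suc m - Suc b)" if x: "x \<le> Suc b" for x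
  proof (cases "x \<le> 1")
    case True
    then show ?thesis using bm by (intro bexI[of _ 0]) auto
  next
    case False
    then obtain x' where xs: "x = Suc x'" "1 \<le> x'" by (cases x) auto
    then obtain y where y: "y \<in> B" "y \<le> x'" "x' \<le> y + (m - b)" using covD(5)[OF c, of x'] x by auto
    show ?thesis
    proof (cases "y = 0")
      case True
      have "(2::nat) \<in> insert 0 (Suc ` (B - {0}))" using one by (simp add: image_iff)
      then show ?thesis using True y xs by (intro bexI[of _ 2]) auto
    next
      case False
      then show ?thesis using y xs by (intro bexI[of _ "Suc y"]) auto
    qed
  qed
qed

definition NP :: "nat \<Rightarrow> nat set set" where
  "NP m = {B \<in> NN m. insert 0 (Suc ` (B - {0})) \<in> NN (Suc m)}"

lemma NP_sub: "NP m \<subseteq> NN m" unfolding NP_def by blast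

lemma NP_fin: "finite (NP m)" by (rule finite_subset[OF NP_sub NN_fin])

lemma zero_NP: "{0} \<in> NP m"
proof -
  have "insert 0 (Suc ` ({0::nat} - {0})) = {0}" by simp
  then show ?thesis unfolding NP_def using zero_NN by simp
qed

lemma R1: "card (NN m) + card (NP m) \<le> card (NN (Suc m))"
proof -
  define P where "P = (\<lambda>B::nat set. insert 0 (Suc ` B))"
  define Q where "Q = (\<lambda>B::nat set. insert 0 (Suc ` (B - {0})))"
  have injP: "inj_on P (NN m)"
  proof (rule inj_onI)
    fix B1 B2 assume "B1 \<in> NN m" "B2 \<in> NN m" "P B1 = P B2"
    then have "Suc ` B1 = Suc ` B2" unfolding P_def
      by (subst (asm) insert_ident) auto
    then show "B1 = B2" by (simp add: inj_image_eq_iff)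
  qed
  have injQ: "inj_on Q (NP m)"
  proof (rule inj_onI)
    fix B1 B2 assume b1: "B1 \<in> NP m" and b2: "B2 \<in> NP m" and e: "Q B1 = Q B2"
    have z1: "0 \<in> B1" using b1 unfolding NP_def NN_def using covD(1) by blast
    have z2: "0 \<in> B2" using b2 unfolding NP_def NN_def using covD(1) by blast
    have "Suc ` (B1 - {0}) = Suc ` (B2 - {0})" using e unfolding Q_def
      by (subst (asm) insert_ident) auto
    then have "B1 - {0} = B2 - {0}" by (simp add: inj_image_eq_iff)
    then show "B1 = B2" using z1 z2 by (metis insert_Diff)
  qed
  have sP: "P ` NN m \<subseteq> NN (Suc m)"
    using P_cov unfolding P_def NN_def by blast
  have sQ: "Q ` NP m \<subseteq> NN (Suc m)"
    unfolding Q_def NP_def by blast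
  have disj: "P ` NN m \<inter> Q ` NP m = {}"
  proof -
    have "1 \<in> P B" if "B \<in> NN m" for B using that unfolding P_def NN_def using covD(1) by force
    moreover have "1 \<notin> Q B" for B unfolding Q_def by auto
    ultimately show ?thesis by blast
  qed
  have fP: "finite (P ` NN m)" using NN_fin by simp
  have fQ: "finite (Q ` NP m)" using NP_fin by simp
  have "card (P ` NN m \<union> Q ` NP m) = card (NN m) + card (NP m)"
    using card_Un_disjoint[OF fP fQ disj] card_image[OF injP] card_image[OF injQ] by simp
  moreover have "card (P ` NN m \<union> Q ` NP m) \<le> card (NN (Suc m))"
    by (rule card_mono[OF NN_fin]) (use sP sQ in blast)
  ultimately show ?thesis by simp
qed

lemma cov_uniq: assumes "cov B b m" "cov B b' m'" shows "b = b'"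
proof -
  have "b \<le> b'" using covD(4)[OF assms(2) covD(2)[OF assms(1)]] .
  moreover have "b' \<le> b" using covD(4)[OF assms(1) covD(2)[OF assms(2)]] .
  ultimately show ?thesis by simp
qed

lemma h2:
  assumes "B \<in> NN m" "1 \<in> B" "B \<notin> NP m"
  shows "B = {0..m}"
proof -
  obtain b where c: "cov B b m" using assms(1) unfolding NN_def by blast
  have "\<not> b < m"
  proof
    assume "b < m"
    then have "insert 0 (Suc ` (B - {0})) \<in> NN (Suc m)" using QL[OF c assms(2)] unfolding NN_def by blast
    then show False using assms unfolding NP_def by blast
  qed
  then have "b = m" using covD(3)[OF c] by simp
  then show ?thesis using cov_full c by simp
qed

lemma h3:
  assumes B: "B \<in> NN m" and n1: "1 \<notin> B" and nP: "B \<notin> NP m"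
  shows "insert 1 B \<in> NP m"
proof -
  obtain b where c: "cov B b m" using assms(1) unfolding NN_def by blast
  have "B \<noteq> {0}" using zero_NP nP by blast
  have b0: "b \<noteq> 0"
  proof
    assume "b = 0"
    then have "B \<subseteq> {0}" using covD(4)[OF c] by auto
    then show False using covD(1)[OF c] \<open>B \<noteq> {0}\<close> by blast
  qed
  have b1: "b \<noteq> 1" using covD(2)[OF c] n1 by auto
  have bm: "b < m"
  proof (rule ccontr)
    assume "\<not> b < m"
    then have "b = m" using covD(3)[OF c] by simp
    then have "B = {0..m}" using cov_full c by simp
    then show False using n1 b0 b1 \<open>b = m\<close> by simp
  qed
  have c2: "cov (insert 1 B) b m"
  proof (rule covI)
    show "0 \<in> insert 1 B" using covD(1)[OF c] by simp
    show "b \<in> insert 1 B" using covD(2)[OF c] by simp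
    show "b \<le> m" using bm by simp
    show "x \<le> b" if "x \<in> insert 1 B" for x using that covD(4)[OF c] b0 by auto
    show "\<exists>y\<in>insert 1 B. y \<le> x \<and> x \<le> y + (m - b)" if "x \<le> b" for x
      using covD(5)[OF c that] by blast
  qed
  have "insert 0 (Suc ` (insert 1 B - {0})) \<in> NN (Suc m)"
    using QL[OF c2 _ bm] unfolding NN_def by blast
  moreover have "insert 1 B \<in> NN m" using c2 unfolding NN_def by blast
  ultimately show ?thesis unfolding NP_def by blast
qed

lemma R2:
  shows "card (NN m) \<le> 2 * card (NP m)"
    and "m \<noteq> 1 \<Longrightarrow> card (NN m) < 2 * card (NP m)"
proof -
  define G where "G = (\<lambda>B::nat set. if 1 \<in> B then {0} else insert 1 B)"
  define H where "H = (\<lambda>B. if B \<in> NP m then (B, True) else (G B, False))"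
  have inj: "inj_on H (NN m)"
  proof (rule inj_onI)
    fix B1 B2 assume b1: "B1 \<in> NN m" and b2: "B2 \<in> NN m" and e: "H B1 = H B2"
    show "B1 = B2"
    proof (cases "B1 \<in> NP m")
      case True
      then show ?thesis using e unfolding H_def by (auto split: if_splits)
    next
      case False
      then have f2: "B2 \<notin> NP m" using e unfolding H_def by (auto split: if_splits)
      have eg: "G B1 = G B2" using e False f2 unfolding H_def by simp
      show ?thesis
      proof (cases "1 \<in> B1")
        case True
        then have "1 \<in> B2" using eg unfolding G_def by (auto split: if_splits)
        then show ?thesis using h2[OF b1 True False] h2[OF b2 _ f2] by simp
      next
        case n1: False
        then have n2: "1 \<notin> B2" using eg unfolding G_def by (auto split: if_splits)
        then have "insert 1 B1 = insert 1 B2" using eg n1 unfolding G_def by simp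
        then show ?thesis using n1 n2 by (simp add: insert_ident)
      qed
    qed
  qed
  have img: "H ` NN m \<subseteq> NP m \<times> UNIV"
  proof
    fix p assume "p \<in> H ` NN m"
    then obtain B where p: "p = H B" and B: "B \<in> NN m" by blast
    show "p \<in> NP m \<times> UNIV"
    proof (cases "B \<in> NP m")
      case True
      then show ?thesis using p unfolding H_def by simp
    next
      case False
      show ?thesis
      proof (cases "1 \<in> B")
        case True
        then show ?thesis using p False zero_NP unfolding H_def G_def by simp
      next
        case n1: False
        then show ?thesis using p False h3[OF B n1 False] unfolding H_def G_def by simp
      qed
    qed
  qed
  have fin: "finite (NP m \<times> (UNIV :: bool set))" using NP_fin by simp
  have cardT: "card (NP m \<times> (UNIV :: bool set)) = 2 * card (NP m)"
    by (simp add: card_cartesian_product)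
  show "card (NN m) \<le> 2 * card (NP m)"
    using card_inj_on_le[OF inj img fin] cardT by simp
  assume m1: "m \<noteq> 1"
  obtain T where T: "T \<in> NP m" "(T, False) \<notin> H ` NN m"
  proof (cases "m = 0")
    case True
    have "(({0}::nat set), False) \<notin> H ` NN m"
    proof
      assume "({0}, False) \<in> H ` NN m"
      then obtain B where B: "B \<in> NN m" and e: "({0}, False) = H B" by blast
      obtain b where c: "cov B b m" using B unfolding NN_def by blast
      have "b = 0" using covD(3)[OF c] True by simp
      then have "B = {0}" using cov_full[of B 0] c True by simp
      then show False using e zero_NP unfolding H_def by simp
    qed
    then show ?thesis using that zero_NP by blast
  next
    case False
    then have m2: "m \<ge> 2" using m1 by simp
    have c01: "cov {0,1} 1 m" by (rule covI) (use m2 in auto)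
    have c02: "cov {0,2} 2 (Suc m)"
    proof (rule covI)
      show "\<exists>y\<in>{0, 2}. y \<le> x \<and> x \<le> y + (Suc m - 2)" if "x \<le> 2" for x
      proof (cases "x = 2")
        case True then show ?thesis by auto
      next
        case False then show ?thesis using that m2 by (intro bexI[of _ 0]) auto
      qed
    qed (use m2 in auto)
    have q: "insert 0 (Suc ` ({0::nat,1} - {0})) = {0,2}" by auto
    have inNP: "{0,1} \<in> NP m" unfolding NP_def NN_def using c01 c02 q by auto
    have "(({0,1}::nat set), False) \<notin> H ` NN m"
    proof
      assume "({0,1}, False) \<in> H ` NN m"
      then obtain B where B: "B \<in> NN m" and e: "({0,1}, False) = H B" by blast
      have nP: "B \<notin> NP m" using e unfolding H_def by (auto split: if_splits)
      then have g: "G B = {0,1}" using e unfolding H_def by simp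
      then have n1: "1 \<notin> B" unfolding G_def by (auto split: if_splits)
      then have "insert 1 B = {0,1}" using g unfolding G_def by simp
      moreover have "0 \<in> B" using B unfolding NN_def using covD(1) by blast
      ultimately have "B = {0}" using n1 by auto
      then show False using nP zero_NP by simp
    qed
    then show ?thesis using that inNP by blast
  qed
  have "(T, False) \<in> NP m \<times> UNIV" using T by simp
  then have "H ` NN m \<subset> NP m \<times> UNIV" using img T by blast
  then have "card (H ` NN m) < card (NP m \<times> (UNIV :: bool set))"
    by (rule psubset_card_mono[OF fin])
  then show "card (NN m) < 2 * card (NP m)" using card_image[OF inj] cardT by simp
qed

lemma Rgrowth:
  shows "3 * card (NN m) \<le> 2 * card (NN (Suc m))"
    and "m \<noteq> 1 \<Longrightarrow> 3 * card (NN m) < 2 * card (NN (Suc m))"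
  using R1[of m] R2[of m] by linarith+

lemma Lgrowth_aux: "(i + 3) * card (NN j) \<le> 2 * card (NN (j + i + 1)) \<and>
   (i \<ge> 1 \<longrightarrow> (i + 3) * card (NN j) < 2 * card (NN (j + i + 1)))"
proof (induction i)
  case 0
  then show ?case using Rgrowth(1)[of j] by simp
next
  case (Suc i)
  let ?a = "card (NN j)" and ?b = "card (NN (j + i + 1))" and ?c = "card (NN (j + Suc i + 1))"
  have ih: "(i + 3) * ?a \<le> 2 * ?b" using Suc.IH by blast
  have r: "3 * ?b \<le> 2 * ?c" using Rgrowth(1)[of "j + i + 1"] by simp
  have pos: "?a \<ge> 1" by (rule NN_pos)
  have "2 * ((Suc i + 3) * ?a) < 3 * ((i + 3) * ?a)" using pos by (simp add: algebra_simps)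
  also have "\<dots> \<le> 3 * (2 * ?b)" using ih by (rule mult_le_mono2)
  also have "\<dots> = 2 * (3 * ?b)" by simp
  also have "\<dots> \<le> 2 * (2 * ?c)" using r by simp
  finally have "2 * ((Suc i + 3) * ?a) < 2 * (2 * ?c)" .
  then have "(Suc i + 3) * ?a < 2 * ?c" using mult_less_cancel1[of 2] by blast
  then show ?case using less_imp_le by blast
qed

lemma Lgrowth:
  assumes "a \<ge> 2"
  shows "(a + 1) * card (NN j) \<le> 2 * card (NN (j + a - 1))"
    and "\<not> (a = 2 \<and> j = 1) \<Longrightarrow> (a + 1) * card (NN j) < 2 * card (NN (j + a - 1))"
proof -
  obtain i where i: "a = i + 2" using assms by (metis add.commute le_Suc_ex)
  have e1: "a + 1 = i + 3" "j + a - 1 = j + i + 1" using i by simp_all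
  show "(a + 1) * card (NN j) \<le> 2 * card (NN (j + a - 1))"
    using Lgrowth_aux[of i j] unfolding e1 by blast
  assume h: "\<not> (a = 2 \<and> j = 1)"
  show "(a + 1) * card (NN j) < 2 * card (NN (j + a - 1))"
  proof (cases "i = 0")
    case True
    then have "j \<noteq> 1" using h i by simp
    then show ?thesis using Rgrowth(2)[of j] True unfolding e1 by simp
  next
    case False
    then show ?thesis using Lgrowth_aux[of i j] unfolding e1 by simp
  qed
qed

lemma sumset_iff: "z \<in> sumset B D \<longleftrightarrow> (\<exists>x\<in>B. \<exists>y\<in>D. z = x + y)"
  unfolding sumset_def by blast

lemma div_struct:
  assumes S: "sumset B D = A" and fA: "finite A" and nA: "A \<noteq> {}"
  defines "s \<equiv> Min B" and "a \<equiv> Min A"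
  defines "A0 \<equiv> {x. x + a \<in> A}" and "B0 \<equiv> {x. x + s \<in> B}"
  shows "B \<noteq> {}" "finite B" "s \<le> a" "\<forall>x\<in>B. s \<le> x" "B0 \<subseteq> A0"
    "cov (B0 \<union> ({0..Max B - s} - A0)) (Max B - s) (Max A - a)"
proof -
  have nB: "B \<noteq> {}" and nD: "D \<noteq> {}" using S nA unfolding sumset_def by auto
  have inA: "x + y \<in> A" if "x \<in> B" "y \<in> D" for x y using S that sumset_iff by blast
  have leMax: "z \<le> Max A" if "z \<in> A" for z using Max_ge[OF fA that] .
  obtain y0 where y0: "y0 \<in> D" using nD by blast
  have fB: "finite B"
  proof (rule finite_subset[of B "{0..Max A}"])
    show "B \<subseteq> {0..Max A}" using inA[OF _ y0] leMax by fastforce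
  qed simp
  obtain x0 where x0: "x0 \<in> B" using nB by blast
  have fD: "finite D"
  proof (rule finite_subset[of D "{0..Max A}"])
    show "D \<subseteq> {0..Max A}" using inA[OF x0] leMax by fastforce
  qed simp
  define t where "t = Min D"
  have sB: "s \<in> B" unfolding s_def using Min_in[OF fB nB] .
  have tD: "t \<in> D" unfolding t_def using Min_in[OF fD nD] .
  have sle: "\<forall>x\<in>B. s \<le> x" unfolding s_def using Min_le[OF fB] by blast
  have tle: "\<forall>x\<in>D. t \<le> x" unfolding t_def using Min_le[OF fD] by blast
  have aA: "a \<in> A" unfolding a_def using Min_in[OF fA nA] .
  have ale: "\<forall>x\<in>A. a \<le> x" unfolding a_def using Min_le[OF fA] by blast
  have st: "s + t = a"
  proof (rule antisym)
    obtain x y where "x \<in> B" "y \<in> D" "a = x + y" using aA S sumset_iff by blast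
    then show "s + t \<le> a" using sle tle by fastforce
    show "a \<le> s + t" using ale inA[OF sB tD] by blast
  qed
  define bB where "bB = Max B"
  have bB: "bB \<in> B" unfolding bB_def using Max_in[OF fB nB] .
  have bBle: "\<forall>x\<in>B. x \<le> bB" unfolding bB_def using Max_ge[OF fB] by blast
  have sbB: "s \<le> bB" using sle bB by blast
  show "B \<noteq> {}" using nB .
  show "finite B" using fB .
  show "s \<le> a" using st by simp
  show "\<forall>x\<in>B. s \<le> x" using sle .
  show sub: "B0 \<subseteq> A0"
  proof
    fix x assume "x \<in> B0"
    then have "x + s \<in> B" unfolding B0_def by simp
    then have "x + s + t \<in> A" using inA tD by blast
    then show "x \<in> A0" unfolding A0_def using st by (simp add: add.assoc)
  qed
  show "cov (B0 \<union> ({0..Max B - s} - A0)) (Max B - s) (Max A - a)"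
    unfolding bB_def[symmetric]
  proof (rule covI)
    show "0 \<in> B0 \<union> ({0..bB - s} - A0)" unfolding B0_def using sB by simp
    show "bB - s \<in> B0 \<union> ({0..bB - s} - A0)" unfolding B0_def using bB sbB by simp
    have "bB + t \<in> A" using inA[OF bB tD] .
    then have "bB + t \<le> Max A" using leMax by blast
    then show "bB - s \<le> Max A - a" using st sbB by linarith
    show "x \<le> bB - s" if "x \<in> B0 \<union> ({0..bB - s} - A0)" for x
      using that bBle unfolding B0_def by fastforce
    show "\<exists>y\<in>B0 \<union> ({0..bB - s} - A0). y \<le> x \<and> x \<le> y + (Max A - a - (bB - s))"
      if x: "x \<le> bB - s" for x
    proof (cases "x \<in> A0")
      case False
      then show ?thesis using x by (intro bexI[of _ x]) auto
    next
      case True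
      then have "x + a \<in> A" unfolding A0_def by simp
      then obtain u v where uv: "u \<in> B" "v \<in> D" "x + a = u + v" using S sumset_iff by blast
      have us: "s \<le> u" using sle uv by blast
      have vt: "t \<le> v" using tle uv by blast
      have "bB + v \<in> A" using inA[OF bB uv(2)] .
      then have "bB + v \<le> Max A" using leMax by blast
      have "u - s \<in> B0" unfolding B0_def using uv us by simp
      moreover have "u - s \<le> x" using uv vt st by linarith
      moreover have "x \<le> (u - s) + (Max A - a - (bB - s))"
        using uv vt st us sbB \<open>bB + v \<le> Max A\<close> by linarith
      ultimately show ?thesis by blast
    qed
  qed
qed

lemma div_fin:
  assumes fA: "finite A" and nA: "A \<noteq> {}"
  shows "finite {B. is_divisor B A}"
proof (rule finite_subset[of _ "Pow {0..Max A}"])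
  show "{B. is_divisor B A} \<subseteq> Pow {0..Max A}"
  proof
    fix B assume "B \<in> {B. is_divisor B A}"
    then obtain D where S: "sumset B D = A" unfolding is_divisor_def by blast
    then have "D \<noteq> {}" using nA unfolding sumset_def by auto
    then obtain y where y: "y \<in> D" by blast
    have "x \<le> Max A" if "x \<in> B" for x
    proof -
      have "x + y \<in> A" using S that y sumset_iff by blast
      then show ?thesis using Max_ge[OF fA] by fastforce
    qed
    then show "B \<in> Pow {0..Max A}" by auto
  qed
qed simp

lemma UB:
  assumes fA: "finite A" and nA: "A \<noteq> {}"
  shows "num_divisors A \<le> (Min A + 1) * card (NN (Max A - Min A))"
    and "A \<noteq> {Min A..Max A} \<Longrightarrow> num_divisors A < (Min A + 1) * card (NN (Max A - Min A))"
proof -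
  define a where "a = Min A"
  define M where "M = Max A - a"
  define A0 where "A0 = {x. x + a \<in> A}"
  define phi where "phi = (\<lambda>B. {x. x + Min B \<in> B} \<union> ({0..Max B - Min B} - A0))"
  define Psi where "Psi = (\<lambda>B. (Min B, phi B))"
  let ?Div = "{B. is_divisor B A}"
  have props: "B \<noteq> {} \<and> finite B \<and> Min B \<le> a \<and> (\<forall>x\<in>B. Min B \<le> x) \<and> {x. x + Min B \<in> B} \<subseteq> A0
      \<and> cov (phi B) (Max B - Min B) M" if hB: "B \<in> ?Div" for B
  proof -
    obtain D where S: "sumset B D = A" using hB unfolding is_divisor_def by blast
    show ?thesis using div_struct[OF S fA nA] unfolding phi_def A0_def M_def a_def by blast
  qed
  have inj: "inj_on Psi ?Div"
  proof (rule inj_onI)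
    fix B1 B2 assume b1: "B1 \<in> ?Div" and b2: "B2 \<in> ?Div" and e: "Psi B1 = Psi B2"
    have s: "Min B1 = Min B2" and p: "phi B1 = phi B2" using e unfolding Psi_def by simp_all
    have int: "phi B \<inter> A0 = {x. x + Min B \<in> B}" if "B \<in> ?Div" for B
      using props[OF that] unfolding phi_def by blast
    have e0: "{x. x + Min B1 \<in> B1} = {x. x + Min B2 \<in> B2}" using int[OF b1] int[OF b2] p by simp
    show "B1 = B2"
    proof (rule set_eqI)
      fix z
      have l1: "\<forall>x\<in>B1. Min B1 \<le> x" and l2: "\<forall>x\<in>B2. Min B2 \<le> x" using props[OF b1] props[OF b2] by blast+
      have "z \<in> B1 \<longleftrightarrow> (Min B1 \<le> z \<and> z - Min B1 \<in> {x. x + Min B1 \<in> B1})" using l1 by auto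
      also have "\<dots> \<longleftrightarrow> (Min B2 \<le> z \<and> z - Min B2 \<in> {x. x + Min B2 \<in> B2})" using e0 s by simp
      also have "\<dots> \<longleftrightarrow> z \<in> B2" using l2 by auto
      finally show "z \<in> B1 \<longleftrightarrow> z \<in> B2" .
    qed
  qed
  have img: "Psi ` ?Div \<subseteq> {0..a} \<times> NN M"
  proof
    fix p assume "p \<in> Psi ` ?Div"
    then obtain B where p: "p = Psi B" and B: "B \<in> ?Div" by blast
    then show "p \<in> {0..a} \<times> NN M" using props[OF B] unfolding Psi_def NN_def by auto
  qed
  have fin: "finite ({0..a} \<times> NN M)" using NN_fin by simp
  have cardT: "card ({0..a} \<times> NN M) = (a + 1) * card (NN M)"
    by (simp add: card_cartesian_product)
  show "num_divisors A \<le> (Min A + 1) * card (NN (Max A - Min A))"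
    using card_inj_on_le[OF inj img fin] cardT unfolding num_divisors_def a_def M_def by simp
  assume ne: "A \<noteq> {Min A..Max A}"
  have "A \<subseteq> {Min A..Max A}" using fA by (simp add: subset_eq)
  then obtain z where z: "z \<in> {a..Max A}" "z \<notin> A" using ne unfolding a_def by blast
  define z' where "z' = z - a"
  have zA0: "z' \<notin> A0" using z unfolding z'_def A0_def by simp
  have zM: "z' \<le> M" using z unfolding z'_def M_def by (simp add: diff_le_mono)
  have inT: "(0, {0..z'}) \<in> {0..a} \<times> NN M" using interval_NN[of z'] NN_mono[OF zM] by auto
  have notin: "(0, {0..z'}) \<notin> Psi ` ?Div"
  proof
    assume "(0, {0..z'}) \<in> Psi ` ?Div"
    then obtain B where B: "B \<in> ?Div" and e: "(0, {0..z'}) = Psi B" by blast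
    have ph: "phi B = {0..z'}" using e unfolding Psi_def by simp
    have c: "cov (phi B) (Max B - Min B) M" using props[OF B] by blast
    have "z' \<le> Max B - Min B" using covD(4)[OF c] ph by simp
    moreover have "Max B - Min B \<le> z'" using covD(2)[OF c] ph by simp
    ultimately have zz: "z' = Max B - Min B" by simp
    have fB: "finite B" and nB: "B \<noteq> {}" using props[OF B] by blast+
    have "Max B - Min B + Min B \<in> B" using Max_in[OF fB nB] Min_le[OF fB Max_in[OF fB nB]] by simp
    then have "z' \<in> {x. x + Min B \<in> B}" using zz by simp
    then have "z' \<in> A0" using props[OF B] by blast
    then show False using zA0 by simp
  qed
  have "Psi ` ?Div \<subset> {0..a} \<times> NN M" using img notin inT by blast
  then have "card (Psi ` ?Div) < card ({0..a} \<times> NN M)" by (rule psubset_card_mono[OF fin])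
  then show "num_divisors A < (Min A + 1) * card (NN (Max A - Min A))"
    using card_image[OF inj] cardT unfolding num_divisors_def a_def M_def by simp
qed

lemma LB:
  assumes k: "k \<ge> 1"
  shows "2 * card (NN (k - 1)) \<le> num_divisors {1..k}"
proof -
  define E where "E = (\<lambda>(i::nat, B::nat set). (\<lambda>x. x + i) ` B)"
  have inj: "inj_on E ({0,1} \<times> NN (k - 1))"
  proof (rule inj_onI)
    fix p1 p2 assume p1: "p1 \<in> {0,1} \<times> NN (k - 1)" and p2: "p2 \<in> {0,1} \<times> NN (k - 1)" and e: "E p1 = E p2"
    obtain i1 B1 i2 B2 where pp: "p1 = (i1, B1)" "p2 = (i2, B2)" by fastforce
    have z1: "0 \<in> B1" using p1 pp unfolding NN_def using covD(1) by blast
    have z2: "0 \<in> B2" using p2 pp unfolding NN_def using covD(1) by blast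
    have e': "(\<lambda>x. x + i1) ` B1 = (\<lambda>x. x + i2) ` B2" using e pp unfolding E_def by simp
    have "i1 \<in> (\<lambda>x. x + i2) ` B2" using e' z1 by (metis add_0 image_eqI)
    then have "i2 \<le> i1" by auto
    moreover have "i2 \<in> (\<lambda>x. x + i1) ` B1" using e' z2 by (metis add_0 image_eqI)
    then have "i1 \<le> i2" by auto
    ultimately have ii: "i1 = i2" by simp
    then have "B1 = B2" using e' by (simp add: inj_image_eq_iff)
    then show "p1 = p2" using pp ii by simp
  qed
  have img: "E ` ({0,1} \<times> NN (k - 1)) \<subseteq> {B. is_divisor B {1..k}}"
  proof
    fix X assume "X \<in> E ` ({0,1} \<times> NN (k - 1))"
    then obtain i B where i: "i \<in> {0,1}" and B: "B \<in> NN (k - 1)" and X: "X = (\<lambda>x. x + i) ` B"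
      unfolding E_def by auto
    obtain b where c: "cov B b (k - 1)" using B unfolding NN_def by blast
    define D where "D = (\<lambda>x. x + (1 - i)) ` {0..k - 1 - b}"
    have "sumset X D = {1..k}"
    proof (rule set_eqI)
      fix z
      show "z \<in> sumset X D \<longleftrightarrow> z \<in> {1..k}"
      proof
        assume "z \<in> sumset X D"
        then obtain x y where xy: "x \<in> X" "y \<in> D" "z = x + y" unfolding sumset_iff by blast
        obtain u where u: "u \<in> B" "x = u + i" using xy(1) unfolding X by blast
        obtain v where v: "v \<in> {0..k - 1 - b}" "y = v + (1 - i)" using xy(2) unfolding D_def by blast
        have "u \<in> B" "v \<le> k - 1 - b" "z = (u + i) + (v + (1 - i))" using u v xy by auto
        then show "z \<in> {1..k}" using covD(3,4)[OF c] i k by fastforce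
      next
        assume zk: "z \<in> {1..k}"
        define y where "y = z - 1"
        have yk: "y \<le> k - 1" "z = y + 1" using zk unfolding y_def by auto
        obtain u where u: "u \<in> B" "u \<le> y" "y \<le> u + (k - 1 - b)"
        proof (cases "y \<le> b")
          case True
          then show ?thesis using covD(5)[OF c True] that by blast
        next
          case False
          then show ?thesis using that[of b] covD(2)[OF c] yk by simp
        qed
        have "u + i \<in> X" using u X by simp
        moreover have "(y - u) + (1 - i) \<in> D"
        proof -
          have "y - u \<in> {0..k - 1 - b}" using u by simp
          then show ?thesis unfolding D_def by (rule imageI)
        qed
        moreover have "z = (u + i) + ((y - u) + (1 - i))" using u yk i by auto
        ultimately show "z \<in> sumset X D" unfolding sumset_iff by blast
      qed
    qed
    then show "X \<in> {B. is_divisor B {1..k}}" unfolding is_divisor_def by blast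
  qed
  have fin: "finite {B. is_divisor B {1..k}}" using div_fin[of "{1..k}"] k by simp
  have "card ({0::nat,1} \<times> NN (k - 1)) = 2 * card (NN (k - 1))"
    by (simp add: card_cartesian_product)
  then show ?thesis using card_inj_on_le[OF inj img fin] unfolding num_divisors_def by simp
qed

lemma key_ineq:
  assumes k: "k \<ge> 1" and ak: "a \<le> k"
  shows "(a + 1) * card (NN (k - a)) \<le> 2 * card (NN (k - 1))"
    and "a \<noteq> 1 \<Longrightarrow> k \<notin> {1, 3} \<Longrightarrow> (a + 1) * card (NN (k - a)) < 2 * card (NN (k - 1))"
proof -
  have both: "(a + 1) * card (NN (k - a)) \<le> 2 * card (NN (k - 1)) \<and>
     (a \<noteq> 1 \<longrightarrow> k \<notin> {1, 3} \<longrightarrow> (a + 1) * card (NN (k - a)) < 2 * card (NN (k - 1)))"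
  proof (cases "a = 0")
    case True
    have e: "k = Suc (k - 1)" using k by simp
    have "card (NN (Suc (k - 1))) \<le> 2 * card (NN (k - 1))" by (rule I0(1))
    moreover have "k \<notin> {1, 3} \<longrightarrow> card (NN (Suc (k - 1))) < 2 * card (NN (k - 1))"
    proof
      assume "k \<notin> {1, 3}"
      then have "k \<noteq> 1" by simp
      then have "k - 1 \<ge> 1" using k by linarith
      then show "card (NN (Suc (k - 1))) < 2 * card (NN (k - 1))" by (rule I0(2))
    qed
    ultimately show ?thesis using True e by (metis add_0 diff_zero mult_1)
  next
    case a0: False
    show ?thesis
    proof (cases "a = 1")
      case True
      then show ?thesis by simp
    next
      case False
      then have a2: "a \<ge> 2" using a0 by simp
      have e: "k - a + a - 1 = k - 1" using ak by simp
      have "(a + 1) * card (NN (k - a)) \<le> 2 * card (NN (k - 1))"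
        using Lgrowth(1)[OF a2, of "k - a"] unfolding e .
      moreover have "k \<notin> {1, 3} \<longrightarrow> (a + 1) * card (NN (k - a)) < 2 * card (NN (k - 1))"
      proof
        assume "k \<notin> {1, 3}"
        then have "\<not> (a = 2 \<and> k - a = 1)" by auto
        then show "(a + 1) * card (NN (k - a)) < 2 * card (NN (k - 1))"
          using Lgrowth(2)[OF a2, of "k - a"] unfolding e by blast
      qed
      ultimately show ?thesis by blast
    qed
  qed
  show "(a + 1) * card (NN (k - a)) \<le> 2 * card (NN (k - 1))" using both by blast
  show "a \<noteq> 1 \<Longrightarrow> k \<notin> {1, 3} \<Longrightarrow> (a + 1) * card (NN (k - a)) < 2 * card (NN (k - 1))"
    using both by blast
qed

theorem mainTheorem2:
  fixes k :: nat
  assumes "k \<ge> 1"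
  shows "(\<forall>A. A \<noteq> {} \<and> A \<subseteq> {0..k} \<longrightarrow> num_divisors A \<le> num_divisors {1..k})
       \<and> (k \<notin> {1, 3} \<longrightarrow>
            (\<forall>A. A \<noteq> {} \<and> A \<subseteq> {0..k} \<and> num_divisors A = num_divisors {1..k}
                 \<longrightarrow> A = {1..k}))"
proof -
  have chain: "num_divisors A \<le> (Min A + 1) * card (NN (Max A - Min A))
      \<and> card (NN (Max A - Min A)) \<le> card (NN (k - Min A))
      \<and> (Min A + 1) * card (NN (k - Min A)) \<le> 2 * card (NN (k - 1))
      \<and> 2 * card (NN (k - 1)) \<le> num_divisors {1..k}
      \<and> Min A \<le> k \<and> Max A \<le> k"
    if A: "A \<noteq> {}" "A \<subseteq> {0..k}" for A
  proof -
    have fA: "finite A" using A(2) finite_subset by blast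
    have aA: "Min A \<in> A" "Max A \<in> A" using Min_in[OF fA A(1)] Max_in[OF fA A(1)] by auto
    then have ak: "Min A \<le> k" "Max A \<le> k" using A(2) by auto
    show ?thesis
      using UB(1)[OF fA A(1)] NN_le[of "Max A - Min A" "k - Min A"] ak
        key_ineq(1)[OF assms ak(1)] LB[OF assms] by (simp add: diff_le_mono)
  qed
  show ?thesis
  proof (intro conjI allI impI)
    fix A assume A: "A \<noteq> {} \<and> A \<subseteq> {0..k}"
    have c: "num_divisors A \<le> (Min A + 1) * card (NN (Max A - Min A))"
      "card (NN (Max A - Min A)) \<le> card (NN (k - Min A))"
      "(Min A + 1) * card (NN (k - Min A)) \<le> 2 * card (NN (k - 1))"
      "2 * card (NN (k - 1)) \<le> num_divisors {1..k}" using chain A by blast+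
    have "(Min A + 1) * card (NN (Max A - Min A)) \<le> (Min A + 1) * card (NN (k - Min A))"
      using c(2) by (rule mult_le_mono2)
    then show "num_divisors A \<le> num_divisors {1..k}" using c by linarith
  next
    fix A assume k13: "k \<notin> {1, 3}"
      and A: "A \<noteq> {} \<and> A \<subseteq> {0..k} \<and> num_divisors A = num_divisors {1..k}"
    have A1: "A \<noteq> {}" "A \<subseteq> {0..k}" using A by auto
    have fA: "finite A" using A1(2) finite_subset by blast
    have c: "num_divisors A \<le> (Min A + 1) * card (NN (Max A - Min A))"
      "card (NN (Max A - Min A)) \<le> card (NN (k - Min A))"
      "(Min A + 1) * card (NN (k - Min A)) \<le> 2 * card (NN (k - 1))"
      "2 * card (NN (k - 1)) \<le> num_divisors {1..k}"
      "Min A \<le> k" "Max A \<le> k" using chain A1 by blast+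
    have m2: "(Min A + 1) * card (NN (Max A - Min A)) \<le> (Min A + 1) * card (NN (k - Min A))"
      using c(2) by (rule mult_le_mono2)
    have eq: "num_divisors A = num_divisors {1..k}" using A by blast
    have a1: "Min A = 1"
    proof (rule ccontr)
      assume "Min A \<noteq> 1"
      then have "(Min A + 1) * card (NN (k - Min A)) < 2 * card (NN (k - 1))"
        using key_ineq(2)[OF assms c(5)] k13 by blast
      then show False using c m2 eq by linarith
    qed
    have eqM: "Max A - Min A = k - 1"
    proof (rule ccontr)
      assume "Max A - Min A \<noteq> k - 1"
      then have "Max A - Min A < k - Min A" using c(6) a1 by simp
      then have "card (NN (Max A - Min A)) < card (NN (k - Min A))" by (rule NN_strict)
      then have "(Min A + 1) * card (NN (Max A - Min A)) < (Min A + 1) * card (NN (k - Min A))"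
        by (rule mult_less_mono2) simp
      then show False using c eq by linarith
    qed
    have "A = {Min A..Max A}"
    proof (rule ccontr)
      assume "A \<noteq> {Min A..Max A}"
      then have "num_divisors A < (Min A + 1) * card (NN (Max A - Min A))" using UB(2)[OF fA A1(1)] by blast
      then show False using c m2 eq by linarith
    qed
    moreover have "Min A \<le> Max A" using Min_le[OF fA Max_in[OF fA A1(1)]] .
    moreover have "Max A = k" using eqM a1 assms c(6) \<open>Min A \<le> Max A\<close> by linarith
    ultimately show "A = {1..k}" using a1 by simp
  qed
qed

end
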